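(* Let $S$ be a compact Hausdorff topological Clifford semigroup satisfying: (B1) $E(S)$, with the subspace topology, is a metrizable perfect semilattice; (B2) each maximal subgroup $G_e$ is compact metrizable; (B3) the functor $e\mapsto G_e$ is inverse-limit preserving. Let $d$ be the function on $S\times S$ constructed below. Then $d$ is a metric on $S$ inducing the topology of $S$ (which coincides with the Bowman topology). In particular $S$ is metrizable.
   Context: A Clifford semigroup is an inverse semigroup (each $x$ has a unique $x^{-1}$ with $xx^{-1}x=x$, $x^{-1}xx^{-1}=x^{-1}$) with $xx^{-1}=x^{-1}x$ for all $x$; a topological Clifford semigroup has continuous multiplication and inversion. $E(S)$ is the set of idempotents, a semilattice ordered by $e\le f\iff ef=e$ (so $ef=\inf\{e,f\}$). $G_e:=\{x: xx^{-1}=e\}$ (subspace topology), $S=\bigsqcup_e G_e$, and we write elements of $S$ as pairs $(e,g)$ with $g\in G_e$. For $e\le f$, $\varphi_{f,e}\colon G_f\to G_e$, $x\mapsto ex$. Way-below: in a poset, $x\ll y$ if for every nonempty up-directed $D$ whose supremum exists with $y\le\sup D$, there is $d\in D$ with $x\le d$; $x\ll y$ implies $x\le y$. A perfect semilattice is a compact Hausdorff topological semilattice in which every point has a neighbourhood basis of open subsemilattices. It is known that a perfect semilattice is a complete continuous semilattice (every $x$ is the supremum of $\{y: y\ll x\}$, which is directed) whose topology is its Lawson topology; in particular each set $\twoheaduparrow b:=\{e: b\ll e\}$ is open, and $E(S)$ has a minimum $0$. A (domain) basis of $E(S)$ is a subset $\mathcal B$ such that for every $x$, $\{b\in\mathcal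 B: b\ll x\}$ is up-directed with supremum $x$; under (B1) $E(S)$ admits a countable basis. The functor $e\mapsto G_e$ is inverse-limit preserving if for every nonempty up-directed $D\subseteq E(S)$ with $e=\sup D$, the map $G_e\to\varprojlim_{b\in D}G_b$, $g\mapsto(\varphi_{e,b}(g))_{b\in D}$, is an isomorphism of topological groups. Construction of $d$: fix a compatible metric $\rho\le 1$ on $E(S)$ and a countable basis $\mathcal B=\{b_j\}_{j\ge1}$ of $E(S)$. For each $b\in\mathcal B$ choose a compatible metric $d_b\le1$ on $G_b$, a point $c_b\in G_b$, and a dense sequence $\{t_{b,k}\}_{k\ge1}$ in $G_b$. For $b\ne 0$ let $a_b(e):=\rho(e,E(S)\setminus\twoheaduparrow b)$ (distance to a set), and let $a_0\equiv1$. Let $\widehat\varphi_{e,b}\colon G_e\to G_b$ be $\varphi_{e,b}$ if $b\le e$ and the constant map with value $c_b$ otherwise. Put $P_b((e,g),(f,h)) := |a_b(e)-a_b(f)| + \sum_{k\ge1}2^{-k}\bigl|a_b(e)\,d_b(\widehat\varphi_{e,b}(g),t_{b,k}) - a_b(f)\,d_b(\widehat\varphi_{f,b}(h),t_{b,k})\bigr|$ and $d((e,g),(f,h)) := \rho(e,f)+\sum_{j\ge1}2^{-j}P_{b_j}((e,g),(f,h))$. *)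

theory Defs
  imports "HOL-Analysis.Analysis"
begin

definition clifford_semigroup :: "('a \<Rightarrow> 'a \<Rightarrow> 'a) \<Rightarrow> ('a \<Rightarrow> 'a) \<Rightarrow> bool" where
  "clifford_semigroup mul iv \<longleftrightarrow>
     (\<forall>x y z. mul (mul x y) z = mul x (mul y z)) \<and>
     (\<forall>x y. (mul (mul x y) x = x \<and> mul (mul y x) y = y) \<longleftrightarrow> y = iv x) \<and>
     (\<forall>x. mul x (iv x) = mul (iv x) x)"

definition topological_clifford_semigroup ::
  "('a::topological_space \<Rightarrow> 'a \<Rightarrow> 'a) \<Rightarrow> ('a \<Rightarrow> 'a) \<Rightarrow> bool" where
  "topological_clifford_semigroup mul iv \<longleftrightarrow>
     clifford_semigroup mul iv \<and>
     continuous_on UNIV (\<lambda>p. mul (fst p) (snd p)) \<and> continuous_on UNIV iv"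

definition idems :: "('a \<Rightarrow> 'a \<Rightarrow> 'a) \<Rightarrow> 'a set" where
  "idems mul = {e. mul e e = e}"

definition sle :: "('a \<Rightarrow> 'a \<Rightarrow> 'a) \<Rightarrow> 'a \<Rightarrow> 'a \<Rightarrow> bool" where
  "sle mul e f \<longleftrightarrow> mul e f = e"

definition Grp :: "('a \<Rightarrow> 'a \<Rightarrow> 'a) \<Rightarrow> ('a \<Rightarrow> 'a) \<Rightarrow> 'a \<Rightarrow> 'a set" where
  "Grp mul iv e = {x. mul x (iv x) = e}"

definition updirected :: "'a set \<Rightarrow> ('a \<Rightarrow> 'a \<Rightarrow> bool) \<Rightarrow> 'a set \<Rightarrow> bool" where
  "updirected E le D \<longleftrightarrow> D \<noteq> {} \<and> D \<subseteq> E \<and>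
     (\<forall>a\<in>D. \<forall>b\<in>D. \<exists>c\<in>D. le a c \<and> le b c)"

definition is_sup :: "'a set \<Rightarrow> ('a \<Rightarrow> 'a \<Rightarrow> bool) \<Rightarrow> 'a set \<Rightarrow> 'a \<Rightarrow> bool" where
  "is_sup E le D s \<longleftrightarrow> s \<in> E \<and> (\<forall>d\<in>D. le d s) \<and>
     (\<forall>u\<in>E. (\<forall>d\<in>D. le d u) \<longrightarrow> le s u)"

definition way_below :: "'a set \<Rightarrow> ('a \<Rightarrow> 'a \<Rightarrow> bool) \<Rightarrow> 'a \<Rightarrow> 'a \<Rightarrow> bool" where
  "way_below E le x y \<longleftrightarrow>
     (\<forall>D s. updirected E le D \<and> is_sup E le D s \<and> le y s \<longrightarrow> (\<exists>d\<in>D. le x d))"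

definition wb_up :: "'a set \<Rightarrow> ('a \<Rightarrow> 'a \<Rightarrow> bool) \<Rightarrow> 'a \<Rightarrow> 'a set" where
  "wb_up E le b = {e \<in> E. way_below E le b e}"

definition domain_basis :: "'a set \<Rightarrow> ('a \<Rightarrow> 'a \<Rightarrow> bool) \<Rightarrow> 'a set \<Rightarrow> bool" where
  "domain_basis E le B \<longleftrightarrow> B \<subseteq> E \<and>
     (\<forall>x\<in>E. updirected E le {b\<in>B. way_below E le b x} \<and>
             is_sup E le {b\<in>B. way_below E le b x} x)"

definition perfect_semilattice :: "('a::topological_space \<Rightarrow> 'a \<Rightarrow> 'a) \<Rightarrow> 'a set \<Rightarrow> bool" where
  "perfect_semilattice mul E \<longleftrightarrow>
     (\<forall>x\<in>E. mul x x = x) \<and> (\<forall>x\<in>E. \<forall>y\<in>E. mul x y \<in> E \<and> mul x y = mul y x) \<and>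
     (\<forall>x\<in>E. \<forall>y\<in>E. \<forall>z\<in>E. mul (mul x y) z = mul x (mul y z)) \<and>
     compactin euclidean E \<and> Hausdorff_space (subtopology euclidean E) \<and>
     continuous_map (prod_topology (subtopology euclidean E) (subtopology euclidean E))
        (subtopology euclidean E) (\<lambda>p. mul (fst p) (snd p)) \<and>
     (\<forall>x\<in>E. \<forall>U. openin (subtopology euclidean E) U \<and> x \<in> U \<longrightarrow>
        (\<exists>V. openin (subtopology euclidean E) V \<and> x \<in> V \<and> V \<subseteq> U \<and>
             (\<forall>a\<in>V. \<forall>b\<in>V. mul a b \<in> V)))"

text \<open>The inverse limit of the groups G_b (b in D) along the maps phi, as a subspace of the
  product space (extensional functions on D).\<close>

definition inv_limit :: "('a \<Rightarrow> 'a \<Rightarrow> 'a) \<Rightarrow> ('a \<Rightarrow> 'a) \<Rightarrow> 'a set \<Rightarrow> ('a \<Rightarrow> 'a) set" where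
  "inv_limit mul iv D = {h. h \<in> (\<Pi>\<^sub>E b\<in>D. Grp mul iv b) \<and>
      (\<forall>b\<in>D. \<forall>b'\<in>D. sle mul b b' \<longrightarrow> mul b (h b') = h b)}"

definition inverse_limit_preserving ::
  "('a::topological_space \<Rightarrow> 'a \<Rightarrow> 'a) \<Rightarrow> ('a \<Rightarrow> 'a) \<Rightarrow> bool" where
  "inverse_limit_preserving mul iv \<longleftrightarrow>
     (\<forall>D e. updirected (idems mul) (sle mul) D \<and> is_sup (idems mul) (sle mul) D e \<longrightarrow>
        (let f = (\<lambda>g. \<lambda>b\<in>D. mul b g) in
          (\<forall>g\<in>Grp mul iv e. \<forall>h\<in>Grp mul iv e. f (mul g h) = (\<lambda>b\<in>D. mul (f g b) (f h b))) \<and>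
          homeomorphic_map (subtopology euclidean (Grp mul iv e))
            (subtopology (product_topology (\<lambda>_. euclidean) D) (inv_limit mul iv D)) f))"

definition restr_metric :: "'a set \<Rightarrow> ('a \<Rightarrow> 'a \<Rightarrow> real) \<Rightarrow> 'a \<Rightarrow> 'a \<Rightarrow> real" where
  "restr_metric M d x y = (if x \<in> M \<and> y \<in> M then d x y else 0)"

text \<open>d is a metric on M (only its values on M matter) inducing the topology X.\<close>
definition compatible_metric :: "'a set \<Rightarrow> ('a \<Rightarrow> 'a \<Rightarrow> real) \<Rightarrow> 'a topology \<Rightarrow> bool" where
  "compatible_metric M d X \<longleftrightarrow> Metric_space M (restr_metric M d) \<and>
     Metric_space.mtopology M (restr_metric M d) = X"

definition a_fun :: "('a \<Rightarrow> 'a \<Rightarrow> 'a) \<Rightarrow> ('a \<Rightarrow> 'a \<Rightarrow> real) \<Rightarrow> 'a \<Rightarrow> 'a \<Rightarrow> real" where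
  "a_fun mul rho b e =
     (let E = idems mul in
      if (\<forall>x\<in>E. sle mul b x) then 1
      else Inf (rho e ` (E - wb_up E (sle mul) b)))"

definition phihat :: "('a \<Rightarrow> 'a \<Rightarrow> 'a) \<Rightarrow> ('a \<Rightarrow> 'a) \<Rightarrow> 'a \<Rightarrow> 'a \<Rightarrow> 'a \<Rightarrow> 'a" where
  "phihat mul c e b g = (if sle mul b e then mul b g else c b)"

definition P_fun :: "('a \<Rightarrow> 'a \<Rightarrow> 'a) \<Rightarrow> ('a \<Rightarrow> 'a) \<Rightarrow> ('a \<Rightarrow> 'a \<Rightarrow> real) \<Rightarrow>
    ('a \<Rightarrow> 'a \<Rightarrow> 'a \<Rightarrow> real) \<Rightarrow> ('a \<Rightarrow> 'a) \<Rightarrow> ('a \<Rightarrow> nat \<Rightarrow> 'a) \<Rightarrow> 'a \<Rightarrow> 'a \<Rightarrow> 'a \<Rightarrow> real" where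
  "P_fun mul iv rho db c t b g h =
     (let e = mul g (iv g); f = mul h (iv h); a = a_fun mul rho b in
      \<bar>a e - a f\<bar> +
      (\<Sum>k. (1/2) ^ Suc k *
         \<bar>a e * db b (phihat mul c e b g) (t b (Suc k)) -
          a f * db b (phihat mul c f b h) (t b (Suc k))\<bar>))"

text \<open>The basis is given as an enumeration bs 1, bs 2, ...; bs 0 is unused.\<close>
definition d_fun :: "('a \<Rightarrow> 'a \<Rightarrow> 'a) \<Rightarrow> ('a \<Rightarrow> 'a) \<Rightarrow> ('a \<Rightarrow> 'a \<Rightarrow> real) \<Rightarrow> (nat \<Rightarrow> 'a) \<Rightarrow>
    ('a \<Rightarrow> 'a \<Rightarrow> 'a \<Rightarrow> real) \<Rightarrow> ('a \<Rightarrow> 'a) \<Rightarrow> ('a \<Rightarrow> nat \<Rightarrow> 'a) \<Rightarrow> 'a \<Rightarrow> 'a \<Rightarrow> real" where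
  "d_fun mul iv rho bs db c t g h =
     rho (mul g (iv g)) (mul h (iv h)) +
     (\<Sum>j. (1/2) ^ Suc j * P_fun mul iv rho db c t (bs (Suc j)) g h)"

end

theory Submission
  imports Defs
begin


lemma cm_metric:
  assumes "compatible_metric M d X" "x \<in> M" "y \<in> M" "z \<in> M"
  shows "0 \<le> d x y" "d x y = d y x" "d x y = 0 \<longleftrightarrow> x = y" "d x z \<le> d x y + d y z"
proof -
  interpret Metric_space M "restr_metric M d" using assms(1) by (simp add: compatible_metric_def)
  show "0 \<le> d x y" using nonneg[of x y] assms by (simp add: restr_metric_def)
  show "d x y = d y x" using commute[of x y] assms by (simp add: restr_metric_def)
  show "d x y = 0 \<longleftrightarrow> x = y" using zero[of x y] assms by (simp add: restr_metric_def)
  show "d x z \<le> d x y + d y z" using triangle[of x y z] assms by (simp add: restr_metric_def)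
qed

lemma cm_open:
  assumes "compatible_metric M d (subtopology euclidean M)"
    "openin (subtopology euclidean M) U" "x \<in> U"
  shows "\<exists>r>0. \<forall>y\<in>M. d x y < r \<longrightarrow> y \<in> U"
proof -
  interpret Metric_space M "restr_metric M d" using assms(1) by (simp add: compatible_metric_def)
  have "openin mtopology U" using assms(1,2) by (simp add: compatible_metric_def)
  then obtain r where r: "r > 0" "mball x r \<subseteq> U" using assms(3) openin_mtopology by blast
  have xM: "x \<in> M" using assms(3) \<open>openin mtopology U\<close> openin_subset by fastforce
  have "y \<in> U" if "y \<in> M" "d x y < r" for y
  proof -
    have "y \<in> mball x r" using that xM by (simp add: restr_metric_def)
    then show ?thesis using r by blast
  qed
  then show ?thesis using r by blast
qed

lemma cm_ball_open:
  assumes "compatible_metric M d (subtopology euclidean M)" "x \<in> M"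
  shows "\<exists>A. open A \<and> A \<inter> M = {y\<in>M. d x y < r}"
proof -
  interpret Metric_space M "restr_metric M d" using assms(1) by (simp add: compatible_metric_def)
  have "openin (subtopology euclidean M) (mball x r)" using assms(1) openin_mball
    by (simp add: compatible_metric_def)
  then obtain A where "open A" "mball x r = A \<inter> M" by (auto simp: openin_subtopology)
  moreover have "mball x r = {y\<in>M. d x y < r}" using assms(2) by (auto simp: restr_metric_def)
  ultimately show ?thesis by auto
qed

lemma cm_cont:
  assumes "compatible_metric M d (subtopology euclidean M)" "L \<ge> 0"
    "\<And>x y. x \<in> M \<Longrightarrow> y \<in> M \<Longrightarrow> \<bar>f x - f y\<bar> \<le> L * d x y"
  shows "continuous_on M (f :: _ \<Rightarrow> real)"
  unfolding continuous_on_topological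
proof (intro ballI allI impI)
  fix x B assume x: "x \<in> M" and B: "open B" "f x \<in> B"
  obtain e where e: "e > 0" "ball (f x) e \<subseteq> B" using openE[OF B(1) B(2)] by blast
  define r where "r = e / (L + 1)"
  have r: "r > 0" using e assms(2) by (simp add: r_def)
  obtain A where A: "open A" "A \<inter> M = {y\<in>M. d x y < r}" using cm_ball_open[OF assms(1) x] by blast
  have "d x x = 0" using cm_metric(3)[OF assms(1) x x x] by simp
  then have "x \<in> {y\<in>M. d x y < r}" using x r by simp
  then have "x \<in> A" using A(2) by blast
  moreover have "f y \<in> B" if "y \<in> M" "y \<in> A" for y
  proof -
    have "d x y < r" using A(2) that by blast
    then have "L * d x y \<le> L * r" using assms(2) by (simp add: mult_left_mono)
    also have "L * r < (L + 1) * r" using r by simp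
    also have "(L + 1) * r = e" using assms(2) by (simp add: r_def)
    finally have "\<bar>f x - f y\<bar> < e" using assms(3)[OF x that(1)] by linarith
    then have "f y \<in> ball (f x) e" by (simp add: dist_real_def)
    then show ?thesis using e by blast
  qed
  ultimately show "\<exists>A. open A \<and> x \<in> A \<and> (\<forall>y\<in>M. y \<in> A \<longrightarrow> f y \<in> B)" using A(1) by blast
qed

lemma cm_dense:
  assumes "compatible_metric M d (subtopology euclidean M)"
    "(subtopology euclidean M) closure_of T = M" "x \<in> M" "r > 0"
  shows "\<exists>y\<in>T. d x y < r"
proof -
  interpret Metric_space M "restr_metric M d" using assms(1) by (simp add: compatible_metric_def)
  have op: "openin (subtopology euclidean M) (mball x r)" using assms(1) openin_mball
    by (simp add: compatible_metric_def)
  have xb: "x \<in> mball x r" using assms(3,4) by simp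
  have cl: "x \<in> (subtopology euclidean M) closure_of T" using assms(2,3) by simp
  have "\<forall>U. x \<in> U \<and> openin (subtopology euclidean M) U \<longrightarrow> (\<exists>y. y \<in> T \<and> y \<in> U)"
    by (rule conjunct2[OF iffD1[OF in_closure_of cl]])
  then have "\<exists>y. y \<in> T \<and> y \<in> mball x r" using op xb by blast
  then obtain y where y: "y \<in> T" "y \<in> mball x r" by blast
  then have "restr_metric M d x y < r" by simp
  then have "d x y < r" using y(2) by (simp add: restr_metric_def)
  then show ?thesis using y(1) by blast
qed


locale CS =
  fixes mul :: "'a::t2_space \<Rightarrow> 'a \<Rightarrow> 'a" and iv :: "'a \<Rightarrow> 'a"
    and rho :: "'a \<Rightarrow> 'a \<Rightarrow> real" and bs :: "nat \<Rightarrow> 'a"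
    and db :: "'a \<Rightarrow> 'a \<Rightarrow> 'a \<Rightarrow> real" and c :: "'a \<Rightarrow> 'a" and t :: "'a \<Rightarrow> nat \<Rightarrow> 'a"
  assumes S: "topological_clifford_semigroup mul iv" "compact (UNIV :: 'a set)"
    and B1: "perfect_semilattice mul (idems mul)"
    and B3: "inverse_limit_preserving mul iv"
    and rho: "compatible_metric (idems mul) rho (subtopology euclidean (idems mul))"
             "\<And>x y. x \<in> idems mul \<Longrightarrow> y \<in> idems mul \<Longrightarrow> rho x y \<le> 1"
    and basis: "domain_basis (idems mul) (sle mul) (bs ` {1..})"
    and db: "\<And>b. b \<in> bs ` {1..} \<Longrightarrow>
               compatible_metric (Grp mul iv b) (db b) (subtopology euclidean (Grp mul iv b)) \<and>
               (\<forall>x\<in>Grp mul iv b. \<forall>y\<in>Grp mul iv b. db b x y \<le> 1)"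
    and c: "\<And>b. b \<in> bs ` {1..} \<Longrightarrow> c b \<in> Grp mul iv b"
    and t: "\<And>b. b \<in> bs ` {1..} \<Longrightarrow> t b ` {1..} \<subseteq> Grp mul iv b \<and>
               (subtopology euclidean (Grp mul iv b)) closure_of (t b ` {1..}) = Grp mul iv b"
begin

abbreviation "E \<equiv> idems mul"
abbreviation "B \<equiv> bs ` {1..}"
abbreviation "le \<equiv> sle mul"
definition "ee x = mul x (iv x)"

lemma assoc: "mul (mul x y) z = mul x (mul y z)"
  using S(1) unfolding topological_clifford_semigroup_def clifford_semigroup_def by blast

lemma inv_iff: "(mul (mul x y) x = x \<and> mul (mul y x) y = y) \<longleftrightarrow> y = iv x"
  using S(1) unfolding topological_clifford_semigroup_def clifford_semigroup_def by blast

lemma cliff: "mul x (iv x) = mul (iv x) x"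
  using S(1) unfolding topological_clifford_semigroup_def clifford_semigroup_def by blast

lemma xix: "mul x (mul (iv x) x) = x"
  using inv_iff[of x "iv x"] by (simp add: assoc)

lemma ee_idem: "mul (ee x) (ee x) = ee x"
  unfolding ee_def by (metis assoc xix)

lemma ee_E: "ee x \<in> E"
  using ee_idem by (simp add: idems_def)

lemma E_comm: "x \<in> E \<Longrightarrow> y \<in> E \<Longrightarrow> mul x y = mul y x"
  using B1 unfolding perfect_semilattice_def by blast

lemma E_mul: "x \<in> E \<Longrightarrow> y \<in> E \<Longrightarrow> mul x y \<in> E"
  using B1 unfolding perfect_semilattice_def by blast

lemma E_idem: "x \<in> E \<Longrightarrow> mul x x = x"
  by (simp add: idems_def)

lemma idem2: "x \<in> E \<Longrightarrow> mul x (mul x z) = mul x z"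
  by (metis assoc E_idem)

lemma le_refl: "x \<in> E \<Longrightarrow> le x x"
  by (simp add: sle_def idems_def)

lemma le_trans: "le x y \<Longrightarrow> le y z \<Longrightarrow> le x z"
  unfolding sle_def by (metis assoc)

lemma in_Grp_ee: "x \<in> Grp mul iv (ee x)"
  by (simp add: Grp_def ee_def)

lemma Grp_ee: "x \<in> Grp mul iv e \<Longrightarrow> ee x = e"
  by (simp add: Grp_def ee_def)

lemma mulG:
  assumes b: "b \<in> E" and be: "le b e" and x: "x \<in> Grp mul iv e"
  shows "mul b x \<in> Grp mul iv b"
proof -
  have ex: "mul x (iv x) = e" using x by (simp add: Grp_def)
  have eE: "e \<in> E" using ex ee_E ee_def by metis
  have be': "mul b e = b" using be by (simp add: sle_def)
  have eb: "mul e b = b" using be' E_comm[OF b eE] by simp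
  have r1: "mul x (mul (iv x) z) = mul e z" for z using ex assoc by metis
  have r2: "mul e (mul b z) = mul b z" for z using eb assoc by metis
  have r3: "mul b (mul b z) = mul b z" for z using idem2[OF b] .
  have bb: "mul b b = b" using b E_idem by blast
  let ?y = "mul (iv x) b"
  have 1: "mul (mul (mul b x) ?y) (mul b x) = mul b x"
    by (simp add: assoc r1 r2 r3)
  have 2: "mul (mul ?y (mul b x)) ?y = ?y"
    by (simp add: assoc r1 r3 eb bb)
  have "?y = iv (mul b x)" using inv_iff 1 2 by blast
  then have "mul (mul b x) (iv (mul b x)) = b"
    by (metis assoc r1 eb bb)
  then show ?thesis by (simp add: Grp_def)
qed


abbreviation "X \<equiv> subtopology euclidean E"

lemma mulcont: "continuous_on UNIV (\<lambda>p. mul (fst p) (snd p))"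
  using S(1) unfolding topological_clifford_semigroup_def by blast

lemma ivcont: "continuous_on UNIV iv"
  using S(1) unfolding topological_clifford_semigroup_def by blast

lemma mul_cont_on:
  assumes "continuous_on A f" "continuous_on A g"
  shows "continuous_on A (\<lambda>x. mul (f x) (g x))"
proof -
  have "continuous_on A (\<lambda>x. (f x, g x))" using assms by (intro continuous_on_Pair)
  from continuous_on_compose2[OF mulcont this] show ?thesis by simp
qed

lemma ee_cont: "continuous_on UNIV ee"
  unfolding ee_def by (intro mul_cont_on continuous_on_id ivcont)

lemma wb_le: "way_below E le b y \<Longrightarrow> y \<in> E \<Longrightarrow> le b y"
proof -
  assume wb: "way_below E le b y" and y: "y \<in> E"
  have "updirected E le {y}" using y le_refl by (auto simp: updirected_def)
  moreover have "is_sup E le {y} y" using y le_refl by (auto simp: is_sup_def)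
  ultimately show "le b y" using wb le_refl[OF y] unfolding way_below_def by blast
qed

lemma wb_mono: "way_below E le b m \<Longrightarrow> le m y \<Longrightarrow> way_below E le b y"
  unfolding way_below_def by (meson le_trans)

lemma basisE: "x \<in> E \<Longrightarrow> updirected E le {b\<in>B. way_below E le b x} \<and>
    is_sup E le {b\<in>B. way_below E le b x} x"
  using basis unfolding domain_basis_def by blast

lemma B_E: "B \<subseteq> E"
  using basis unfolding domain_basis_def by blast

lemma closed_down: "closedin X {z\<in>E. le z u}"
proof -
  have "closed {z. mul z u = z}"
    by (intro closed_Collect_eq continuous_on_id mul_cont_on continuous_on_const)
  then have "closedin X (E \<inter> {z. mul z u = z})" by (rule closedin_closed_Int)
  moreover have "E \<inter> {z. mul z u = z} = {z\<in>E. le z u}" by (auto simp: sle_def)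
  ultimately show ?thesis by simp
qed

lemma meet_exists:
  assumes "finite F" "F \<noteq> {}" "F \<subseteq> V" "V \<subseteq> E" "\<forall>a\<in>V. \<forall>b\<in>V. mul a b \<in> V"
  shows "\<exists>z\<in>V. \<forall>y\<in>F. le z y"
  using assms(1-3)
proof (induction F rule: finite_ne_induct)
  case (singleton x)
  then show ?case using le_refl assms(4) by blast
next
  case (insert x F)
  then obtain z where z: "z \<in> V" "\<forall>y\<in>F. le z y" by blast
  have x: "x \<in> V" using insert by blast
  have xE: "x \<in> E" and zE: "z \<in> E" using x z assms(4) by blast+
  have "le (mul x z) x" unfolding sle_def
    by (metis assoc E_comm[OF zE xE] idem2[OF xE])
  moreover have "le (mul x z) y" if "y \<in> F" for y
    using z(2) that unfolding sle_def by (metis assoc)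
  moreover have "mul x z \<in> V" using assms(5) x z by blast
  ultimately show ?case by blast
qed

lemma rho_metric: "x \<in> E \<Longrightarrow> y \<in> E \<Longrightarrow> z \<in> E \<Longrightarrow>
   0 \<le> rho x y \<and> rho x y = rho y x \<and> (rho x y = 0 \<longleftrightarrow> x = y) \<and> rho x z \<le> rho x y + rho y z"
  using cm_metric[OF rho(1)] by blast

lemma key:
  assumes e: "e \<in> E" and r: "r > 0"
  shows "\<exists>V m. openin X V \<and> e \<in> V \<and> m \<in> E \<and> rho e m < r \<and> (\<forall>y\<in>V. le m y)"
proof -
  obtain A where A: "open A" "A \<inter> E = {y\<in>E. rho e y < r/2}" using cm_ball_open[OF rho(1) e] by blast
  have U0: "openin X {y\<in>E. rho e y < r/2}" using A by (auto simp: openin_subtopology)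
  have "e \<in> {y\<in>E. rho e y < r/2}" using e r rho_metric[OF e e e] by simp
  then obtain V where V: "openin X V" "e \<in> V" "V \<subseteq> {y\<in>E. rho e y < r/2}"
     "\<forall>a\<in>V. \<forall>b\<in>V. mul a b \<in> V"
    using B1 U0 e unfolding perfect_semilattice_def by meson
  have VE: "V \<subseteq> E" using V(3) by blast
  define K where "K = {z\<in>E. rho e z \<le> r/2}"
  have Kc: "closedin X K"
  proof -
    interpret Metric_space E "restr_metric E rho" using rho(1) by (simp add: compatible_metric_def)
    have "closedin mtopology (mcball e (r/2))" by simp
    moreover have "mcball e (r/2) = K" using e by (auto simp: K_def restr_metric_def)
    ultimately show ?thesis using rho(1) by (simp add: compatible_metric_def)
  qed
  define U where "U = (\<lambda>y. {z\<in>E. le z y} \<inter> K) ` V"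
  have cs: "compact_space X"
    using B1 unfolding perfect_semilattice_def by (simp add: compact_space_subtopology)
  have "\<Inter>U \<noteq> {}"
  proof (rule cs[unfolded compact_space_fip, rule_format], intro conjI allI impI ballI)
    fix C assume "C \<in> U"
    then show "closedin X C" unfolding U_def using closed_down Kc by blast
  next
    fix F assume F: "finite F \<and> F \<subseteq> U"
    then obtain V' where V': "V' \<subseteq> V" "finite V'" "F = (\<lambda>y. {z\<in>E. le z y} \<inter> K) ` V'"
      unfolding U_def by (meson finite_subset_image)
    show "\<Inter>F \<noteq> {}"
    proof (cases "V' = {}")
      case True then show ?thesis using V' by simp
    next
      case False
      then obtain z where z: "z \<in> V" "\<forall>y\<in>V'. le z y" using meet_exists[OF V'(2) False V'(1) VE V(4)] by blast
      have "z \<in> K" using z(1) V(3) by (auto simp: K_def)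
      then have "z \<in> \<Inter>F" using V'(3) z VE by blast
      then show ?thesis by blast
    qed
  qed
  then obtain m where m: "m \<in> \<Inter>U" by blast
  have "m \<in> {z\<in>E. le z e} \<inter> K" using m V(2) unfolding U_def by blast
  then have mE: "m \<in> E" "rho e m < r" using r by (auto simp: K_def)
  have "\<forall>y\<in>V. le m y" using m unfolding U_def by blast
  then show ?thesis using V(1,2) mE by blast
qed

end

definition pm :: "('a \<Rightarrow> 'a \<Rightarrow> real) \<Rightarrow> real \<Rightarrow> bool" where
  "pm p C \<longleftrightarrow> (\<forall>x y. 0 \<le> p x y \<and> p x y \<le> C \<and> p x y = p y x) \<and> (\<forall>x. p x x = 0) \<and>
     (\<forall>x y z. p x z \<le> p x y + p y z)"

lemma pm_abs: "(\<And>x. \<bar>f x\<bar> \<le> K) \<Longrightarrow> pm (\<lambda>x y. \<bar>f x - f y\<bar>) (2 * K)"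
  unfolding pm_def by (smt (verit))

lemma pm_add: "pm p C \<Longrightarrow> pm q D \<Longrightarrow> pm (\<lambda>x y. p x y + q x y) (C + D)"
  unfolding pm_def by (smt (verit))

lemma half_summable: "summable (\<lambda>n. C * (1/2::real)^Suc n)"
  using power_half_series summable_mult sums_summable by blast

lemma half_sum: "(\<Sum>n. C * (1/2::real)^Suc n) = C"
  using power_half_series suminf_mult sums_summable sums_unique by (metis mult.right_neutral)

lemma half_summable_bdd:
  assumes "\<And>n. 0 \<le> f n \<and> f n \<le> C"
  shows "summable (\<lambda>n. (1/2::real)^Suc n * f n)"
proof (rule summable_comparison_test[OF _ half_summable[of C]])
  show "\<exists>N. \<forall>n\<ge>N. norm ((1/2::real)^Suc n * f n) \<le> C * (1/2)^Suc n"
    using assms by (auto simp: abs_mult mult.commute intro!: mult_right_mono)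
qed

lemma pm_sum:
  assumes "\<And>n. pm (p n) C"
  shows "pm (\<lambda>x y. \<Sum>n. (1/2::real)^Suc n * p n x y) C"
proof -
  have b: "0 \<le> p n x y \<and> p n x y \<le> C" for n x y using assms[of n] by (simp add: pm_def)
  have s: "summable (\<lambda>n. (1/2::real)^Suc n * p n x y)" for x y
    by (rule half_summable_bdd) (use b in auto)
  have nn: "0 \<le> (\<Sum>n. (1/2::real)^Suc n * p n x y)" for x y
    by (rule suminf_nonneg[OF s]) (use b in simp)
  have le: "(\<Sum>n. (1/2::real)^Suc n * p n x y) \<le> C" for x y
  proof -
    have "(\<Sum>n. (1/2::real)^Suc n * p n x y) \<le> (\<Sum>n. C * (1/2::real)^Suc n)"
      by (rule suminf_le[OF _ s half_summable]) (use b in \<open>auto simp: mult.commute intro: mult_left_mono\<close>)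
    also have "\<dots> = C" by (rule half_sum)
    finally show ?thesis .
  qed
  have sym: "p n x y = p n y x" for n x y using assms[of n] by (simp add: pm_def)
  have diag: "p n x x = 0" for n x using assms[of n] by (simp add: pm_def)
  have tri: "(\<Sum>n. (1/2::real)^Suc n * p n x z) \<le> (\<Sum>n. (1/2::real)^Suc n * p n x y) + (\<Sum>n. (1/2::real)^Suc n * p n y z)" for x y z
  proof -
    have "(\<Sum>n. (1/2::real)^Suc n * p n x z) \<le> (\<Sum>n. (1/2::real)^Suc n * p n x y + (1/2::real)^Suc n * p n y z)"
    proof (rule suminf_le[OF _ s summable_add[OF s s]])
      fix n
      have "p n x z \<le> p n x y + p n y z" using assms[of n] by (simp add: pm_def)
      then show "(1/2::real)^Suc n * p n x z \<le> (1/2::real)^Suc n * p n x y + (1/2::real)^Suc n * p n y z"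
        by (simp add: distrib_left[symmetric])
    qed
    also have "\<dots> = (\<Sum>n. (1/2::real)^Suc n * p n x y) + (\<Sum>n. (1/2::real)^Suc n * p n y z)"
      by (rule suminf_add[OF s s, symmetric])
    finally show ?thesis .
  qed
  have ss: "(\<Sum>n. (1/2::real)^Suc n * p n x y) = (\<Sum>n. (1/2::real)^Suc n * p n y x)" for x y
    by (rule arg_cong[where f=suminf], rule ext, subst sym, rule refl)
  have dd: "(\<Sum>n. (1/2::real)^Suc n * p n x x) = 0" for x by (simp add: diag)
  show ?thesis unfolding pm_def using nn le tri ss dd by blast
qed

lemma cont_series:
  fixes f :: "nat \<Rightarrow> 'b::topological_space \<Rightarrow> real"
  assumes "\<And>n. continuous_on UNIV (f n)" "\<And>n y. \<bar>f n y\<bar> \<le> C"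
  shows "continuous_on UNIV (\<lambda>y. \<Sum>n. (1/2::real)^Suc n * f n y)"
proof (rule uniform_limit_theorem)
  show "uniform_limit UNIV (\<lambda>m y. \<Sum>n<m. (1/2::real)^Suc n * f n y) (\<lambda>y. \<Sum>n. (1/2::real)^Suc n * f n y) sequentially"
  proof (rule Weierstrass_m_test[OF _ half_summable[of C]])
    fix n y
    show "norm ((1/2::real)^Suc n * f n y) \<le> C * (1/2)^Suc n"
      using assms(2)[of n y] by (simp add: abs_mult mult.commute mult_left_mono)
  qed
  show "\<forall>\<^sub>F m in sequentially. continuous_on UNIV (\<lambda>y. \<Sum>n<m. (1/2::real)^Suc n * f n y)"
    using assms(1) by (intro always_eventually allI continuous_on_sum continuous_on_mult continuous_on_const) auto
qed simp

context CS begin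

definition D2 where
  "D2 e = {b\<in>B. \<exists>V. openin X V \<and> e \<in> V \<and> (\<forall>y\<in>V. way_below E le b y)}"

lemma wb_sup_ex:
  assumes "way_below E le b m" "updirected E le D" "is_sup E le D m" "m \<in> E"
  shows "\<exists>d\<in>D. le b d"
  using assms le_refl unfolding way_below_def by blast

lemma D2_dir: assumes e: "e \<in> E" shows "updirected E le (D2 e)"
proof -
  obtain V m where Vm: "openin X V" "e \<in> V" "m \<in> E" "\<forall>y\<in>V. le m y"
    using key[OF e, of 1] by auto
  have "updirected E le {b\<in>B. way_below E le b m}" using basisE[OF Vm(3)] by blast
  then obtain b where b: "b \<in> B" "way_below E le b m" unfolding updirected_def by blast
  have "b \<in> D2 e" unfolding D2_def using b Vm wb_mono by blast
  then have ne: "D2 e \<noteq> {}" by blast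
  have sub: "D2 e \<subseteq> E" using B_E unfolding D2_def by blast
  have dir: "\<exists>cc\<in>D2 e. le a cc \<and> le b cc" if ab: "a \<in> D2 e" "b \<in> D2 e" for a b
  proof -
    obtain V1 where V1: "openin X V1" "e \<in> V1" "\<forall>y\<in>V1. way_below E le a y" using ab(1) unfolding D2_def by blast
    obtain V2 where V2: "openin X V2" "e \<in> V2" "\<forall>y\<in>V2. way_below E le b y" using ab(2) unfolding D2_def by blast
    have "openin X (V1 \<inter> V2)" using V1 V2 by blast
    then obtain r where r: "r > 0" "\<forall>y\<in>E. rho e y < r \<longrightarrow> y \<in> V1 \<inter> V2"
      using cm_open[OF rho(1)] V1 V2 by blast
    obtain V3 m3 where V3: "openin X V3" "e \<in> V3" "m3 \<in> E" "rho e m3 < r" "\<forall>y\<in>V3. le m3 y"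
      using key[OF e r(1)] by blast
    have m3: "m3 \<in> V1 \<inter> V2" using r V3 by blast
    have bm: "updirected E le {b\<in>B. way_below E le b m3}" "is_sup E le {b\<in>B. way_below E le b m3} m3"
      using basisE[OF V3(3)] by blast+
    obtain c1 where c1: "c1 \<in> {b\<in>B. way_below E le b m3}" "le a c1"
      using wb_sup_ex[OF _ bm V3(3)] V1(3) m3 by blast
    obtain c2 where c2: "c2 \<in> {b\<in>B. way_below E le b m3}" "le b c2"
      using wb_sup_ex[OF _ bm V3(3)] V2(3) m3 by blast
    obtain cc where cc: "cc \<in> {b\<in>B. way_below E le b m3}" "le c1 cc" "le c2 cc"
      using bm(1) c1 c2 unfolding updirected_def by blast
    have "cc \<in> D2 e" unfolding D2_def using cc(1) V3 wb_mono by blast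
    then show ?thesis using cc c1 c2 le_trans by blast
  qed
  show ?thesis unfolding updirected_def using ne sub dir by blast
qed

lemma D2_sup: assumes e: "e \<in> E" shows "is_sup E le (D2 e) e"
proof -
  have ub: "le b e" if "b \<in> D2 e" for b
    using that e wb_le unfolding D2_def by blast
  have least: "le e u" if u: "u \<in> E" "\<forall>b\<in>D2 e. le b u" for u
  proof (rule ccontr)
    assume ne: "\<not> le e u"
    have "openin X (topspace X - {z\<in>E. le z u})" using closed_down by blast
    then have N: "openin X (E - {z\<in>E. le z u})" by simp
    obtain r where r: "r > 0" "\<forall>y\<in>E. rho e y < r \<longrightarrow> y \<in> E - {z\<in>E. le z u}"
      using cm_open[OF rho(1) N] e ne by blast
    obtain V m where Vm: "openin X V" "e \<in> V" "m \<in> E" "rho e m < r" "\<forall>y\<in>V. le m y"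
      using key[OF e r(1)] by blast
    have bm: "is_sup E le {b\<in>B. way_below E le b m} m" using basisE[OF Vm(3)] by blast
    have "\<forall>b\<in>{b\<in>B. way_below E le b m}. le b u"
    proof
      fix b assume "b \<in> {b\<in>B. way_below E le b m}"
      then have "b \<in> D2 e" unfolding D2_def using Vm wb_mono by blast
      then show "le b u" using u by blast
    qed
    then have "le m u" using bm u unfolding is_sup_def by blast
    then show False using r Vm by blast
  qed
  show ?thesis unfolding is_sup_def using e ub least by blast
qed

end

context CS begin

abbreviation "af b e \<equiv> a_fun mul rho b e"

lemma af_else: assumes "\<not> (\<forall>x\<in>E. le b x)" shows "af b e = Inf (rho e ` (E - wb_up E le b))"
  unfolding a_fun_def Let_def by (rule if_not_P[OF assms])

lemma af_min: "(\<forall>x\<in>E. le b x) \<Longrightarrow> af b e = 1"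
  by (simp add: a_fun_def Let_def)

lemma compl_ne: "\<not> (\<forall>x\<in>E. le b x) \<Longrightarrow> E - wb_up E le b \<noteq> {}"
  using wb_le unfolding wb_up_def by blast

lemma af_bounds: assumes e: "e \<in> E" shows "0 \<le> af b e \<and> af b e \<le> 1"
proof (cases "\<forall>x\<in>E. le b x")
  case True then show ?thesis by (simp add: af_min)
next
  case False
  let ?S = "rho e ` (E - wb_up E le b)"
  have ne: "?S \<noteq> {}" using compl_ne[OF False] by blast
  have b0: "\<forall>v\<in>?S. 0 \<le> v" using rho_metric e unfolding wb_up_def by blast
  have b1: "\<forall>v\<in>?S. v \<le> 1" using rho(2) e unfolding wb_up_def by blast
  have "0 \<le> Inf ?S" using ne b0 by (intro cInf_greatest) auto
  moreover have "Inf ?S \<le> 1"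
  proof -
    obtain v where "v \<in> ?S" using ne by blast
    moreover have "bdd_below ?S" using b0 by (auto simp: bdd_below_def)
    ultimately have "Inf ?S \<le> v" by (intro cInf_lower)
    moreover have "v \<le> 1" using b1 \<open>v \<in> ?S\<close> by blast
    ultimately show ?thesis by linarith
  qed
  ultimately show ?thesis using af_else[OF False] by simp
qed

lemma af_pos_le: assumes e: "e \<in> E" and p: "af b e > 0" shows "le b e"
proof (cases "\<forall>x\<in>E. le b x")
  case True then show ?thesis using e by blast
next
  case False
  let ?S = "rho e ` (E - wb_up E le b)"
  have b0: "\<forall>v\<in>?S. 0 \<le> v" using rho_metric e unfolding wb_up_def by blast
  have "e \<in> wb_up E le b"
  proof (rule ccontr)
    assume "e \<notin> wb_up E le b"
    then have "rho e e \<in> ?S" using e by blast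
    moreover have "bdd_below ?S" using b0 by (auto simp: bdd_below_def)
    ultimately have "Inf ?S \<le> rho e e" by (intro cInf_lower)
    then show False using p af_else[OF False] rho_metric[OF e e e] by simp
  qed
  then show ?thesis using wb_le e unfolding wb_up_def by blast
qed

lemma af_lip: assumes e: "e \<in> E" and f: "f \<in> E" shows "\<bar>af b e - af b f\<bar> \<le> rho e f"
proof (cases "\<forall>x\<in>E. le b x")
  case True then show ?thesis using af_min rho_metric[OF e f f] by simp
next
  case False
  let ?C = "E - wb_up E le b"
  have ne: "?C \<noteq> {}" using compl_ne[OF False] .
  have one: "Inf (rho x ` ?C) - rho x y \<le> Inf (rho y ` ?C)" if xy: "x \<in> E" "y \<in> E" for x y
  proof -
    have bdd: "bdd_below (rho x ` ?C)" using rho_metric xy unfolding bdd_below_def by blast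
    have "Inf (rho x ` ?C) - rho x y \<le> rho y z" if z: "z \<in> ?C" for z
    proof -
      have "Inf (rho x ` ?C) \<le> rho x z" using bdd z by (intro cInf_lower) auto
      moreover have "rho x z \<le> rho x y + rho y z" using rho_metric xy z by blast
      ultimately show ?thesis by linarith
    qed
    then show ?thesis using ne by (intro cInf_greatest) auto
  qed
  have "rho e f = rho f e" using rho_metric e f by blast
  moreover have "af b e = Inf (rho e ` ?C)" "af b f = Inf (rho f ` ?C)" using af_else[OF False] by blast+
  ultimately show ?thesis using one[OF e f] one[OF f e] unfolding abs_le_iff by linarith
qed

lemma af_D2: assumes e: "e \<in> E" and b: "b \<in> D2 e" shows "af b e > 0"
proof (cases "\<forall>x\<in>E. le b x")
  case True then show ?thesis by (simp add: af_min)
next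
  case False
  obtain V where V: "openin X V" "e \<in> V" "\<forall>y\<in>V. way_below E le b y" using b unfolding D2_def by blast
  obtain r where r: "r > 0" "\<forall>y\<in>E. rho e y < r \<longrightarrow> y \<in> V" using cm_open[OF rho(1) V(1,2)] by blast
  have "r \<le> Inf (rho e ` (E - wb_up E le b))"
  proof (rule cInf_greatest)
    show "rho e ` (E - wb_up E le b) \<noteq> {}" using compl_ne[OF False] by blast
    fix v assume "v \<in> rho e ` (E - wb_up E le b)"
    then obtain y where y: "y \<in> E" "y \<notin> wb_up E le b" "v = rho e y" by blast
    have "y \<notin> V" using y V(3) unfolding wb_up_def by blast
    then show "r \<le> v" using r y by force
  qed
  then show ?thesis using r af_else[OF False] by simp
qed

lemma af_cont: "continuous_on E (af b)"
  by (rule cm_cont[OF rho(1), of 1]) (use af_lip in auto)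

lemma af_ee_cont: "continuous_on UNIV (\<lambda>y. af b (ee y))"
  by (rule continuous_on_compose2[OF af_cont ee_cont]) (use ee_E in auto)

lemma rho_cont: assumes "e0 \<in> E" shows "continuous_on UNIV (\<lambda>y. rho e0 (ee y))"
proof -
  have "continuous_on E (rho e0)"
  proof (rule cm_cont[OF rho(1), of 1])
    fix x y assume "x \<in> E" "y \<in> E"
    then show "\<bar>rho e0 x - rho e0 y\<bar> \<le> 1 * rho x y" using rho_metric assms by (smt (verit))
  qed simp
  then show ?thesis by (rule continuous_on_compose2[OF _ ee_cont]) (use ee_E in auto)
qed

end

context CS begin

definition "bj j = bs (Suc j)"
definition "Af j y = af (bj j) (ee y)"
definition "Uf j k y = Af j y * db (bj j) (phihat mul c (ee y) (bj j) y) (t (bj j) (Suc k))"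
definition "Qf j x y = \<bar>Af j x - Af j y\<bar> + (\<Sum>k. (1/2::real)^Suc k * \<bar>Uf j k x - Uf j k y\<bar>)"
abbreviation "dd \<equiv> d_fun mul iv rho bs db c t"

lemma d_expand: "dd x y = rho (ee x) (ee y) + (\<Sum>j. (1/2::real)^Suc j * Qf j x y)"
  by (simp add: d_fun_def P_fun_def Let_def ee_def Af_def Uf_def Qf_def bj_def)

lemma bj_B: "bj j \<in> B" by (simp add: bj_def)

lemma db_facts: assumes "b \<in> B"
  shows "compatible_metric (Grp mul iv b) (db b) (subtopology euclidean (Grp mul iv b))"
    "\<And>x y. x \<in> Grp mul iv b \<Longrightarrow> y \<in> Grp mul iv b \<Longrightarrow> db b x y \<le> 1"
  using db[OF assms] by blast+

lemma db_metric: assumes "b \<in> B" "x \<in> Grp mul iv b" "y \<in> Grp mul iv b" "z \<in> Grp mul iv b"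
  shows "0 \<le> db b x y \<and> db b x y = db b y x \<and> (db b x y = 0 \<longleftrightarrow> x = y) \<and> db b x z \<le> db b x y + db b y z"
  using cm_metric[OF db_facts(1)[OF assms(1)] assms(2-4)] by blast

lemma t_G: "b \<in> B \<Longrightarrow> t b (Suc k) \<in> Grp mul iv b"
  using t by fastforce

lemma phihat_G: assumes "b \<in> B" shows "phihat mul c (ee y) b y \<in> Grp mul iv b"
  unfolding phihat_def using mulG[OF _ _ in_Grp_ee] c[OF assms] B_E assms by auto

lemma db_bounds: assumes "b \<in> B" shows "0 \<le> db b (phihat mul c (ee y) b y) (t b (Suc k)) \<and>
    db b (phihat mul c (ee y) b y) (t b (Suc k)) \<le> 1"
  using db_metric[OF assms phihat_G[OF assms] t_G[OF assms] t_G[OF assms]]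
    db_facts(2)[OF assms phihat_G[OF assms] t_G[OF assms]] by blast

lemma Af_bounds: "0 \<le> Af j y \<and> Af j y \<le> 1"
  unfolding Af_def using af_bounds[OF ee_E] by blast

lemma Uf_bounds: "0 \<le> Uf j k y \<and> Uf j k y \<le> 1"
proof -
  have "0 \<le> Af j y" "Af j y \<le> 1" using Af_bounds by blast+
  moreover have "0 \<le> db (bj j) (phihat mul c (ee y) (bj j) y) (t (bj j) (Suc k))"
     "db (bj j) (phihat mul c (ee y) (bj j) y) (t (bj j) (Suc k)) \<le> 1" using db_bounds[OF bj_B] by blast+
  ultimately show ?thesis unfolding Uf_def by (simp add: mult_le_one)
qed

lemma pm_Q: "pm (Qf j) 4"
proof -
  have "pm (\<lambda>x y. \<bar>Af j x - Af j y\<bar>) (2 * 1)" by (rule pm_abs) (use Af_bounds in auto)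
  moreover have "pm (\<lambda>x y. \<Sum>k. (1/2::real)^Suc k * \<bar>Uf j k x - Uf j k y\<bar>) (2 * 1)"
    by (rule pm_sum, rule pm_abs) (use Uf_bounds in auto)
  ultimately have "pm (\<lambda>x y. \<bar>Af j x - Af j y\<bar> + (\<Sum>k. (1/2::real)^Suc k * \<bar>Uf j k x - Uf j k y\<bar>)) (2 * 1 + 2 * 1)"
    by (rule pm_add)
  then show ?thesis unfolding Qf_def[abs_def] by simp
qed

lemma pm_rho: "pm (\<lambda>x y. rho (ee x) (ee y)) 1"
  unfolding pm_def using rho_metric[OF ee_E ee_E ee_E] rho(2)[OF ee_E ee_E] by blast

lemma pm_d: "pm dd 5"
proof -
  have "pm (\<lambda>x y. rho (ee x) (ee y) + (\<Sum>j. (1/2::real)^Suc j * Qf j x y)) (1 + 4)"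
    by (rule pm_add[OF pm_rho pm_sum[OF pm_Q]])
  moreover have "dd = (\<lambda>x y. rho (ee x) (ee y) + (\<Sum>j. (1/2::real)^Suc j * Qf j x y))"
    using d_expand by (intro ext) simp
  ultimately show ?thesis by simp
qed

lemma sep: assumes "dd x y = 0" shows "x = y"
proof -
  have Qb: "0 \<le> Qf j x y \<and> Qf j x y \<le> 4" for j using pm_Q[of j] unfolding pm_def by blast
  have sQ: "summable (\<lambda>j. (1/2::real)^Suc j * Qf j x y)" by (rule half_summable_bdd) (use Qb in blast)
  have nQ: "0 \<le> (\<Sum>j. (1/2::real)^Suc j * Qf j x y)" by (rule suminf_nonneg[OF sQ]) (use Qb in simp)
  have r0: "0 \<le> rho (ee x) (ee y)" using rho_metric[OF ee_E ee_E ee_E] by blast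
  have "rho (ee x) (ee y) = 0" "(\<Sum>j. (1/2::real)^Suc j * Qf j x y) = 0"
    using assms d_expand[of x y] nQ r0 by linarith+
  note zz = this
  have ee: "ee x = ee y" using zz(1) rho_metric[OF ee_E ee_E ee_E, of x y] by blast
  have pos: "\<And>j. 0 \<le> (1/2::real)^Suc j * Qf j x y" using Qb by simp
  have allQ: "\<forall>j. (1/2::real)^Suc j * Qf j x y = 0" using suminf_eq_zero_iff[OF sQ pos] zz(2) by blast
  define e where "e = ee x"
  have e: "e \<in> E" unfolding e_def by (rule ee_E)
  have xG: "x \<in> Grp mul iv e" "y \<in> Grp mul iv e" unfolding e_def using in_Grp_ee ee by metis+
  have eqb: "mul b x = mul b y" if b: "b \<in> D2 e" for b
  proof -
    have bB: "b \<in> B" using b unfolding D2_def by blast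
    then obtain n where n: "n \<ge> 1" "b = bs n" by auto
    define j where "j = n - 1"
    have bj: "bj j = b" using n by (simp add: bj_def j_def)
    have pos: "af b e > 0" by (rule af_D2[OF e b])
    have lbe: "le b e" by (rule af_pos_le[OF e pos])
    have Q0: "Qf j x y = 0" using allQ by simp
    have Ub: "0 \<le> \<bar>Uf j k x - Uf j k y\<bar> \<and> \<bar>Uf j k x - Uf j k y\<bar> \<le> 2" for k using Uf_bounds[of j k x] Uf_bounds[of j k y] by linarith
    have sU: "summable (\<lambda>k. (1/2::real)^Suc k * \<bar>Uf j k x - Uf j k y\<bar>)" by (rule half_summable_bdd) (use Ub in blast)
    have nU: "0 \<le> (\<Sum>k. (1/2::real)^Suc k * \<bar>Uf j k x - Uf j k y\<bar>)" by (rule suminf_nonneg[OF sU]) simp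
    have "(\<Sum>k. (1/2::real)^Suc k * \<bar>Uf j k x - Uf j k y\<bar>) = 0" using Q0 nU unfolding Qf_def by linarith
    then have "\<forall>k. (1/2::real)^Suc k * \<bar>Uf j k x - Uf j k y\<bar> = 0" using suminf_eq_zero_iff[OF sU] by simp
    then have Ueq: "Uf j k x = Uf j k y" for k by simp
    have ph: "phihat mul c e b z = mul b z" for z
      using lbe by (simp add: phihat_def)
    have keq: "db b (mul b x) (t b (Suc k)) = db b (mul b y) (t b (Suc k))" for k
    proof -
      have eex: "ee x = e" by (simp add: e_def)
      have eey: "ee y = e" using ee by (simp add: e_def)
      have "Uf j k x = af b e * db b (mul b x) (t b (Suc k))"
        unfolding Uf_def Af_def bj eex ph by (rule refl)
      moreover have "Uf j k y = af b e * db b (mul b y) (t b (Suc k))"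
        unfolding Uf_def Af_def bj eey ph by (rule refl)
      ultimately have "af b e * db b (mul b x) (t b (Suc k)) = af b e * db b (mul b y) (t b (Suc k))"
        using Ueq[of k] by argo
      then show ?thesis using pos by simp
    qed
    have bxG: "mul b x \<in> Grp mul iv b" and byG: "mul b y \<in> Grp mul iv b"
      using mulG[OF _ lbe] xG B_E bB by blast+
    have cmb: "compatible_metric (Grp mul iv b) (db b) (subtopology euclidean (Grp mul iv b))"
      by (rule db_facts(1)[OF bB])
    have tb: "t b ` {1..} \<subseteq> Grp mul iv b" "(subtopology euclidean (Grp mul iv b)) closure_of (t b ` {1..}) = Grp mul iv b"
      using t[OF bB] by blast+
    have small: "db b (mul b x) (mul b y) < 2 * \<epsilon>" if eps: "\<epsilon> > 0" for \<epsilon>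
    proof -
      obtain z where z: "z \<in> t b ` {1..}" "db b (mul b y) z < \<epsilon>" using cm_dense[OF cmb tb(2) byG eps] by blast
      then obtain n' where n': "n' \<ge> 1" "z = t b n'" by auto
      have "n' = Suc (n' - 1)" using n' by simp
      then obtain k where k: "n' = Suc k" by blast
      have zG: "z \<in> Grp mul iv b" using z tb by blast
      have "db b (mul b x) (mul b y) \<le> db b (mul b x) z + db b z (mul b y)"
        using db_metric[OF bB bxG zG byG] by blast
      also have "db b (mul b x) z = db b (mul b y) z" using keq[of k] n' k by simp
      also have "db b z (mul b y) = db b (mul b y) z" using db_metric[OF bB zG byG byG] by blast
      finally show ?thesis using z by linarith
    qed
    have "db b (mul b x) (mul b y) \<le> 0"
    proof (rule ccontr)
      assume "\<not> db b (mul b x) (mul b y) \<le> 0"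
      then show False using small[of "db b (mul b x) (mul b y) / 2"] by simp
    qed
    moreover have "0 \<le> db b (mul b x) (mul b y)" using db_metric[OF bB bxG byG byG] by blast
    ultimately have "db b (mul b x) (mul b y) = 0" by linarith
    then show ?thesis using db_metric[OF bB bxG byG byG] by blast
  qed
  have hm: "homeomorphic_map (subtopology euclidean (Grp mul iv e))
            (subtopology (product_topology (\<lambda>_. euclidean) (D2 e)) (inv_limit mul iv (D2 e)))
            (\<lambda>g. \<lambda>b\<in>D2 e. mul b g)"
  proof -
    have "\<forall>D e. updirected E le D \<and> is_sup E le D e \<longrightarrow>
        (let f = (\<lambda>g. \<lambda>b\<in>D. mul b g) in
          (\<forall>g\<in>Grp mul iv e. \<forall>h\<in>Grp mul iv e. f (mul g h) = (\<lambda>b\<in>D. mul (f g b) (f h b))) \<and>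
          homeomorphic_map (subtopology euclidean (Grp mul iv e))
            (subtopology (product_topology (\<lambda>_. euclidean) D) (inv_limit mul iv D)) f)"
      using B3 unfolding inverse_limit_preserving_def .
    note H = spec[where x=e, OF spec[where x="D2 e", OF this]]
    show ?thesis using mp[OF H conjI[OF D2_dir[OF e] D2_sup[OF e]]] unfolding Let_def by (rule conjunct2)
  qed
  have inj: "inj_on (\<lambda>g. \<lambda>b\<in>D2 e. mul b g) (Grp mul iv e)"
    using homeomorphic_imp_injective_map[OF hm] by simp
  have "(\<lambda>b\<in>D2 e. mul b x) = (\<lambda>b\<in>D2 e. mul b y)" by (rule restrict_ext) (use eqb in blast)
  then show ?thesis using inj_onD[OF inj] xG by blast
qed

lemma metric_d: "Metric_space UNIV dd"
proof
  fix x y z :: 'a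
  show "0 \<le> dd x y" using pm_d unfolding pm_def by blast
  show "dd x y = dd y x" using pm_d unfolding pm_def by blast
  show "dd x y = 0 \<longleftrightarrow> x = y" using pm_d sep unfolding pm_def by blast
  show "dd x z \<le> dd x y + dd y z" using pm_d unfolding pm_def by blast
qed

end

context CS begin

lemma db_cont1: assumes b: "b \<in> B" and s: "s \<in> Grp mul iv b"
  shows "continuous_on (Grp mul iv b) (\<lambda>z. db b z s)"
proof (rule cm_cont[OF db_facts(1)[OF b], of 1])
  fix x y assume xy: "x \<in> Grp mul iv b" "y \<in> Grp mul iv b"
  have "db b x s \<le> db b x y + db b y s" "db b y s \<le> db b y x + db b x s" "db b x y = db b y x"
    using db_metric[OF b xy(1) xy(2) s] db_metric[OF b xy(2) xy(1) s] by blast+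
  then show "\<bar>db b x s - db b y s\<bar> \<le> 1 * db b x y" by linarith
qed simp

lemma U_cont: assumes b: "b \<in> B" and s: "s \<in> Grp mul iv b"
  shows "continuous_on UNIV (\<lambda>y. af b (ee y) * db b (phihat mul c (ee y) b y) s)"
  (is "continuous_on UNIV ?F")
proof -
  let ?g = "\<lambda>y. af b (ee y)"
  have gc: "continuous_on UNIV ?g" by (rule af_ee_cont)
  have g0: "0 \<le> ?g y" for y using af_bounds[OF ee_E] by blast
  have dbb: "0 \<le> db b (phihat mul c (ee y) b y) s \<and> db b (phihat mul c (ee y) b y) s \<le> 1" for y
    using db_metric[OF b phihat_G[OF b] s s] db_facts(2)[OF b phihat_G[OF b] s] by blast
  have "isCont ?F y0" for y0
  proof (cases "?g y0 > 0")
    case True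
    define N where "N = {y. 0 < ?g y}"
    have oN: "open N" unfolding N_def by (rule open_Collect_less[OF continuous_on_const gc])
    have y0N: "y0 \<in> N" using True by (simp add: N_def)
    have leN: "le b (ee y)" if "y \<in> N" for y using af_pos_le[OF ee_E] that by (simp add: N_def)
    have mc: "continuous_on N (\<lambda>y. mul b y)" by (intro mul_cont_on continuous_on_const continuous_on_id)
    have img: "(\<lambda>y. mul b y) ` N \<subseteq> Grp mul iv b"
      using mulG[OF _ leN in_Grp_ee] B_E b by blast
    have hc: "continuous_on N (\<lambda>y. db b (mul b y) s)"
      by (rule continuous_on_compose2[OF db_cont1[OF b s] mc img])
    have Gc: "continuous_on N (\<lambda>y. ?g y * db b (mul b y) s)"
      by (intro continuous_on_mult hc continuous_on_subset[OF gc]) simp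
    have Gat: "isCont (\<lambda>y. ?g y * db b (mul b y) s) y0"
      using Gc y0N unfolding continuous_on_eq_continuous_at[OF oN] by blast
    have ev: "eventually (\<lambda>y. ?F y = ?g y * db b (mul b y) s) (nhds y0)"
      unfolding eventually_nhds using oN y0N leN by (auto simp: phihat_def)
    show ?thesis using isCont_cong[OF ev] Gat by blast
  next
    case False
    then have gz: "?g y0 = 0" using g0[of y0] by linarith
    have gat: "isCont ?g y0" using gc unfolding continuous_on_eq_continuous_at[OF open_UNIV] by blast
    have gt: "(?g \<longlongrightarrow> 0) (at y0)" using isContD[OF gat] gz by simp
    have evn: "eventually (\<lambda>y. norm (?F y) \<le> ?g y) (at y0)"
    proof (rule always_eventually, rule allI)
      fix y
      have "norm (?F y) = ?g y * db b (phihat mul c (ee y) b y) s" using g0[of y] dbb[of y] by (simp add: abs_mult)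
      also have "\<dots> \<le> ?g y * 1" using g0[of y] dbb[of y] by (intro mult_left_mono) auto
      finally show "norm (?F y) \<le> ?g y" by simp
    qed
    have "(?F \<longlongrightarrow> 0) (at y0)" by (rule Lim_null_comparison[OF evn gt])
    moreover have Fz: "?F y0 = 0" using gz by simp
    ultimately have "(?F \<longlongrightarrow> ?F y0) (at y0)" unfolding Fz by blast
    then show ?thesis unfolding isCont_def .
  qed
  then show ?thesis unfolding continuous_on_eq_continuous_at[OF open_UNIV] by blast
qed

lemma Uf_cont: "continuous_on UNIV (Uf j k)"
  unfolding Uf_def[abs_def] Af_def by (rule U_cont[OF bj_B t_G[OF bj_B]])

lemma Af_cont: "continuous_on UNIV (Af j)"
  unfolding Af_def[abs_def] by (rule af_ee_cont)

lemma Q_cont: "continuous_on UNIV (\<lambda>y. Qf j x0 y)"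
proof -
  have "continuous_on UNIV (\<lambda>y. \<Sum>k. (1/2::real)^Suc k * \<bar>Uf j k x0 - Uf j k y\<bar>)"
  proof (rule cont_series)
    show "continuous_on UNIV (\<lambda>y. \<bar>Uf j k x0 - Uf j k y\<bar>)" for k
      by (intro continuous_on_rabs continuous_on_diff continuous_on_const Uf_cont)
    show "\<bar>\<bar>Uf j k x0 - Uf j k y\<bar>\<bar> \<le> 2" for k y using Uf_bounds[of j k x0] Uf_bounds[of j k y] by linarith
  qed
  moreover have "continuous_on UNIV (\<lambda>y. \<bar>Af j x0 - Af j y\<bar>)"
    by (intro continuous_on_rabs continuous_on_diff continuous_on_const Af_cont)
  ultimately show ?thesis unfolding Qf_def by (intro continuous_on_add)
qed

lemma d_cont: "continuous_on UNIV (\<lambda>y. dd x0 y)"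
proof -
  have "continuous_on UNIV (\<lambda>y. \<Sum>j. (1/2::real)^Suc j * Qf j x0 y)"
  proof (rule cont_series[OF Q_cont])
    show "\<bar>Qf j x0 y\<bar> \<le> 4" for j y using pm_Q[of j] unfolding pm_def by (metis abs_of_nonneg)
  qed
  then have "continuous_on UNIV (\<lambda>y. rho (ee x0) (ee y) + (\<Sum>j. (1/2::real)^Suc j * Qf j x0 y))"
    by (intro continuous_on_add rho_cont[OF ee_E])
  then show ?thesis unfolding d_expand .
qed

lemma final: "Metric_space UNIV dd \<and> Metric_space.mtopology UNIV dd = (euclidean :: 'a topology) \<and>
         metrizable_space (euclidean :: 'a topology)"
proof -
  interpret MD: Metric_space UNIV dd by (rule metric_d)
  have o1: "open U" if "openin MD.mtopology U" for U
  proof (subst open_subopen, intro ballI)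
    fix x assume "x \<in> U"
    have "\<forall>x. x \<in> U \<longrightarrow> (\<exists>r>0. MD.mball x r \<subseteq> U)" using that unfolding MD.openin_mtopology by (rule conjunct2)
    then obtain r where r: "r > 0" "MD.mball x r \<subseteq> U" using \<open>x \<in> U\<close> by blast
    have ob: "open {y. dd x y < r}" by (rule open_Collect_less[OF d_cont continuous_on_const])
    have mb: "MD.mball x r = {y. dd x y < r}" by (simp add: MD.mball_def)
    have "dd x x = 0" using MD.zero[of x x] by simp
    then have xin: "x \<in> {y. dd x y < r}" using r(1) by simp
    have "{y. dd x y < r} \<subseteq> U" using r(2) unfolding mb .
    then show "\<exists>T. open T \<and> x \<in> T \<and> T \<subseteq> U" using ob xin by blast
  qed
  have cm: "continuous_map euclidean MD.mtopology id"
    unfolding continuous_map_def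
  proof (intro conjI allI impI)
    show "id \<in> topspace euclidean \<rightarrow> topspace MD.mtopology" by simp
    fix U assume "openin MD.mtopology U"
    then have "open U" by (rule o1)
    then show "openin euclidean {x \<in> topspace euclidean. id x \<in> U}" by simp
  qed
  have o2: "openin MD.mtopology U" if "open U" for U
  proof -
    have "closed (- U)" using that by (simp add: closed_Compl)
    then have "compact (UNIV \<inter> - U)" by (rule compact_Int_closed[OF S(2)])
    then have "compactin euclidean (- U)" by simp
    then have "compactin MD.mtopology (id ` (- U))" by (rule image_compactin[OF _ cm])
    then have "closedin MD.mtopology (- U)"
      using compactin_imp_closedin[OF MD.Hausdorff_space_mtopology] by simp
    then show ?thesis unfolding closedin_def by simp
  qed
  have eqS: "openin MD.mtopology S \<longleftrightarrow> openin euclidean S" for S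
  proof
    assume "openin MD.mtopology S"
    then have "open S" by (rule o1)
    then show "openin euclidean S" by simp
  next
    assume "openin euclidean S"
    then have "open S" by simp
    then show "openin MD.mtopology S" by (rule o2)
  qed
  have eq: "MD.mtopology = euclidean" by (intro topology_eq[THEN iffD2] allI eqS)
  have "metrizable_space MD.mtopology" by (rule MD.metrizable_space_mtopology)
  then have met: "metrizable_space (euclidean :: 'a topology)" unfolding eq .
  show ?thesis by (intro conjI metric_d eq met)
qed

end

theorem corollary4p16:
  fixes mul :: "'a::t2_space \<Rightarrow> 'a \<Rightarrow> 'a" and iv :: "'a \<Rightarrow> 'a"
    and rho :: "'a \<Rightarrow> 'a \<Rightarrow> real" and bs :: "nat \<Rightarrow> 'a"
    and db :: "'a \<Rightarrow> 'a \<Rightarrow> 'a \<Rightarrow> real" and c :: "'a \<Rightarrow> 'a" and t :: "'a \<Rightarrow> nat \<Rightarrow> 'a"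
  assumes S: "topological_clifford_semigroup mul iv" "compact (UNIV :: 'a set)"
    and B1: "perfect_semilattice mul (idems mul)"
            "metrizable_space (subtopology euclidean (idems mul))"
    and B2: "\<And>e. e \<in> idems mul \<Longrightarrow> compact (Grp mul iv e) \<and>
                 metrizable_space (subtopology euclidean (Grp mul iv e))"
    and B3: "inverse_limit_preserving mul iv"
    and rho: "compatible_metric (idems mul) rho (subtopology euclidean (idems mul))"
             "\<And>x y. x \<in> idems mul \<Longrightarrow> y \<in> idems mul \<Longrightarrow> rho x y \<le> 1"
    and basis: "domain_basis (idems mul) (sle mul) (bs ` {1..})"
    and db: "\<And>b. b \<in> bs ` {1..} \<Longrightarrow>
               compatible_metric (Grp mul iv b) (db b) (subtopology euclidean (Grp mul iv b)) \<and>
               (\<forall>x\<in>Grp mul iv b. \<forall>y\<in>Grp mul iv b. db b x y \<le> 1)"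
    and c: "\<And>b. b \<in> bs ` {1..} \<Longrightarrow> c b \<in> Grp mul iv b"
    and t: "\<And>b. b \<in> bs ` {1..} \<Longrightarrow> t b ` {1..} \<subseteq> Grp mul iv b \<and>
               (subtopology euclidean (Grp mul iv b)) closure_of (t b ` {1..}) = Grp mul iv b"
  shows "Metric_space UNIV (d_fun mul iv rho bs db c t) \<and>
         Metric_space.mtopology UNIV (d_fun mul iv rho bs db c t) = (euclidean :: 'a topology) \<and>
         metrizable_space (euclidean :: 'a topology)"
proof -
  interpret CS mul iv rho bs db c t
    by (rule CS.intro[OF S(1) S(2) B1(1) B3 rho(1) rho(2) basis db c t])
  show ?thesis by (rule final)
qed

end
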